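(* Let $e\ge1$ and let $A$ be the binomial nilpotent $\mathbb{F}_p$-algebra in $e$ variables, i.e. the ideal generated by $x_1,\dots,x_e$ in $\mathbb{F}_p[x_1,\dots,x_e]/(x_1^2,\dots,x_e^2)$; it has dimension $2^e-1$, with basis the nonempty squarefree monomials, and satisfies $A^e\ne0$, $A^{e+1}=0$. Then for every $t$ with $1\le t\le e$ and every $u\in N_t\setminus N_{t-1}$, \[ \dim_{\mathbb{F}_p}(\mathbb{F}_pu+Au)\ge 2^{t-1}. \]
   Context: $N_k=\{a\in A: y_1\cdots y_k a=0\ \forall y_1,\dots,y_k\in A\}$, $N_0=0$. *)

theory Defs
  imports Complex_Main "HOL-Library.Function_Algebras" "HOL-Computational_Algebra.Primes"
begin

text \<open>An element is represented by its coefficient function on squarefree monomials,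
  a monomial being identified with its (finite) set of variables S.\<close>

definition bn_alg :: "nat \<Rightarrow> (nat set \<Rightarrow> 'a::field) set" where
  "bn_alg e = {f. \<forall>S. f S \<noteq> 0 \<longrightarrow> S \<noteq> {} \<and> S \<subseteq> {..<e}}"

text \<open>Multiplication: x_T * x_U = x_(T \<union> U) if T, U disjoint, and 0 otherwise.\<close>
definition bn_mult :: "nat \<Rightarrow> (nat set \<Rightarrow> 'a::field) \<Rightarrow> (nat set \<Rightarrow> 'a) \<Rightarrow> (nat set \<Rightarrow> 'a)" where
  "bn_mult e f g = (\<lambda>S. if S \<subseteq> {..<e} then (\<Sum>T\<in>Pow S. f T * g (S - T)) else 0)"

definition bn_scale :: "'a::field \<Rightarrow> (nat set \<Rightarrow> 'a) \<Rightarrow> (nat set \<Rightarrow> 'a)" where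
  "bn_scale c f = (\<lambda>S. c * f S)"

definition bn_N :: "nat \<Rightarrow> nat \<Rightarrow> (nat set \<Rightarrow> 'a::field) set" where
  "bn_N e k = {a \<in> bn_alg e. \<forall>ys. length ys = k \<and> set ys \<subseteq> bn_alg e \<longrightarrow>
                 foldr (bn_mult e) ys a = 0}"

end

theory Submission
  imports Defs "HOL-Library.FuncSet"
begin

lemma bn_vs: "vector_space (bn_scale :: 'a::field \<Rightarrow> (nat set \<Rightarrow> 'a) \<Rightarrow> _)"
  by unfold_locales (auto simp: bn_scale_def fun_eq_iff algebra_simps)

lemma bn_mult_supp: "bn_mult e f g S \<noteq> 0 \<Longrightarrow> S \<subseteq> {..<e}"
  by (auto simp: bn_mult_def split: if_splits)

lemma bn_mult_deg:
  assumes f: "f \<in> bn_alg e" and g: "\<forall>S. g S \<noteq> 0 \<longrightarrow> m \<le> card S"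
    and ne: "bn_mult e f g S \<noteq> (0::'a::field)"
  shows "Suc m \<le> card S"
proof -
  have Se: "S \<subseteq> {..<e}" using ne by (auto simp: bn_mult_def split: if_splits)
  then have fS: "finite S" using finite_subset by blast
  have "(\<Sum>T\<in>Pow S. f T * g (S - T)) \<noteq> 0" using ne Se by (simp add: bn_mult_def)
  then obtain T where T: "T \<in> Pow S" "f T * g (S - T) \<noteq> 0"
    using sum.not_neutral_contains_not_neutral by blast
  then have "T \<noteq> {}" using f by (auto simp: bn_alg_def)
  moreover have "finite T" using T fS finite_subset by auto
  ultimately have c1: "1 \<le> card T" by (simp add: Suc_leI card_gt_0_iff)
  have c2: "m \<le> card (S - T)" using g T by auto
  have "card S = card T + card (S - T)"
    using T fS by (metis PowD card_Diff_subset card_mono finite_subset le_add_diff_inverse)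
  then show ?thesis using c1 c2 by linarith
qed

lemma bn_foldr_deg:
  assumes "set ys \<subseteq> bn_alg e" "\<forall>S. u S \<noteq> 0 \<longrightarrow> m \<le> card S"
  shows "foldr (bn_mult e) ys u S \<noteq> (0::'a::field) \<Longrightarrow> m + length ys \<le> card S"
  using assms(1)
proof (induction ys arbitrary: S)
  case Nil
  then show ?case using assms(2) by simp
next
  case (Cons y ys)
  have "\<forall>S. foldr (bn_mult e) ys u S \<noteq> 0 \<longrightarrow> m + length ys \<le> card S"
    using Cons by auto
  then show ?case using bn_mult_deg[of y e "foldr (bn_mult e) ys u" "m + length ys" S] Cons
    by simp
qed

lemma bn_foldr_supp:
  assumes "u \<in> bn_alg e"
  shows "foldr (bn_mult e) ys u S \<noteq> (0::'a::field) \<Longrightarrow> S \<subseteq> {..<e}"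
proof (cases ys)
  case Nil
  then show "foldr (bn_mult e) ys u S \<noteq> 0 \<Longrightarrow> S \<subseteq> {..<e}" using assms by (auto simp: bn_alg_def)
next
  case (Cons y ys')
  then show "foldr (bn_mult e) ys u S \<noteq> 0 \<Longrightarrow> S \<subseteq> {..<e}"
    using bn_mult_supp[of e y "foldr (bn_mult e) ys' u" S] by simp
qed

lemma bn_low_deg:
  assumes u: "u \<in> bn_alg e" and nN: "u \<notin> bn_N e k" and ke: "k \<le> e"
  shows "\<exists>S. u S \<noteq> (0::'a::field) \<and> card S + k \<le> e"
proof (rule ccontr)
  assume "\<not> ?thesis"
  then have h: "\<forall>S. u S \<noteq> 0 \<longrightarrow> e + 1 - k \<le> card S" by force
  have "u \<in> bn_N e k"
    unfolding bn_N_def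
  proof (intro CollectI conjI u allI impI)
    fix ys :: "(nat set \<Rightarrow> 'a) list"
    assume ys: "length ys = k \<and> set ys \<subseteq> bn_alg e"
    show "foldr (bn_mult e) ys u = 0"
    proof (rule ext, rule ccontr)
      fix S assume ne: "foldr (bn_mult e) ys u S \<noteq> 0 S"
      then have ne': "foldr (bn_mult e) ys u S \<noteq> 0" by simp
      have "e + 1 - k + length ys \<le> card S" using bn_foldr_deg[OF _ h ne'] ys by auto
      moreover have "S \<subseteq> {..<e}" using bn_foldr_supp[OF u ne'] .
      then have "card S \<le> e" by (metis card_lessThan card_mono finite_lessThan)
      ultimately show False using ys ke by auto
    qed
  qed
  then show False using nN by simp
qed

lemma sum_fun_app: "(\<Sum>W\<in>X. f W) x = (\<Sum>W\<in>X. (f W x :: 'b::comm_monoid_add))"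
  by (induction X rule: infinite_finite_induct) auto

definition bn_delta :: "nat set \<Rightarrow> nat set \<Rightarrow> 'a::field" where
  "bn_delta W = (\<lambda>T. if T = W then 1 else 0)"

lemma bn_mult_delta:
  "bn_mult e (bn_delta W) u M = (if M \<subseteq> {..<e} \<and> W \<subseteq> M then u (M - W) else (0::'a::field))"
proof (cases "M \<subseteq> {..<e}")
  case True
  then have "finite M" using finite_subset by blast
  have "(\<Sum>T\<in>Pow M. bn_delta W T * u (M - T)) = (\<Sum>T\<in>Pow M. if W = T then u (M - T) else 0)"
    by (rule sum.cong) (auto simp: bn_delta_def)
  also have "\<dots> = (if W \<in> Pow M then u (M - W) else 0)"
    using \<open>finite M\<close> by (simp add: sum.delta')
  finally show ?thesis using True by (simp add: bn_mult_def)
next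
  case False
  then show ?thesis by (simp add: bn_mult_def)
qed

lemma bn_finite_supp:
  "finite {f :: nat set \<Rightarrow> 'a::{finite,zero}. \<forall>S. f S \<noteq> 0 \<longrightarrow> S \<subseteq> {..<e}}"
proof -
  let ?P = "Pow {..<e}"
  have "{f :: nat set \<Rightarrow> 'a. \<forall>S. f S \<noteq> 0 \<longrightarrow> S \<subseteq> {..<e}} \<subseteq>
        (\<lambda>g S. if S \<in> ?P then g S else 0) ` (?P \<rightarrow>\<^sub>E (UNIV :: 'a set))"
  proof
    fix f :: "nat set \<Rightarrow> 'a" assume "f \<in> {f. \<forall>S. f S \<noteq> 0 \<longrightarrow> S \<subseteq> {..<e}}"
    then have "f = (\<lambda>S. if S \<in> ?P then restrict f ?P S else 0)"
      by (auto simp: fun_eq_iff)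
    then show "f \<in> (\<lambda>g S. if S \<in> ?P then g S else 0) ` (?P \<rightarrow>\<^sub>E UNIV)"
      by (intro image_eqI[where x="restrict f ?P"]) auto
  qed
  moreover have "finite (?P \<rightarrow>\<^sub>E (UNIV :: 'a set))" by (intro finite_PiE) auto
  ultimately show ?thesis using finite_subset by blast
qed

theorem proposition4p3:
  fixes e t :: nat and u :: "nat set \<Rightarrow> 'a::{field,finite}"
  assumes "prime (card (UNIV :: 'a set))"
    and "e \<ge> 1" and "1 \<le> t" and "t \<le> e"
    and "u \<in> bn_N e t - bn_N e (t - 1)"
  shows "vector_space.dim bn_scale
           {bn_scale c u + bn_mult e a u | c a. a \<in> bn_alg e} \<ge> 2 ^ (t - 1)"
proof -
  interpret vector_space "bn_scale :: 'a \<Rightarrow> _" by (rule bn_vs)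
  define V where "V = {bn_scale c u + bn_mult e a u | c a. a \<in> bn_alg e}"
  have u: "u \<in> bn_alg e" and nN: "u \<notin> bn_N e (t - 1)"
    using assms(5) by (auto simp: bn_N_def)
  have "\<exists>S. u S \<noteq> 0 \<and> card S + (t - 1) \<le> e"
    by (rule bn_low_deg[OF u nN]) (use assms in linarith)
  then obtain S where S: "u S \<noteq> 0" "card S + (t - 1) \<le> e" by blast
  have Se: "S \<subseteq> {..<e}" using S u by (auto simp: bn_alg_def)
  have "card ({..<e} - S) = e - card S" using Se by (simp add: card_Diff_subset finite_subset)
  then obtain R where R: "R \<subseteq> {..<e} - S" "card R = t - 1"
    using S(2) obtain_subset_with_card_n[of "t - 1" "{..<e} - S"] by force
  have fR: "finite R" using R finite_subset by blast
  define g where "g W = bn_mult e (bn_delta W) u" for W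
  have gM: "g W M = (if M \<subseteq> {..<e} \<and> W \<subseteq> M then u (M - W) else 0)" for W M
    by (simp add: g_def bn_mult_delta)
  have gSW: "g W (S \<union> W) = u S" if "W \<in> Pow R" for W
  proof -
    have "S \<union> W - W = S" using that R by auto
    then show ?thesis using that R Se by (auto simp: gM)
  qed
  have gsub: "W' \<subseteq> W" if "W \<in> Pow R" "W' \<in> Pow R" "g W' (S \<union> W) \<noteq> 0" for W W'
  proof -
    have "W' \<subseteq> S \<union> W" using that(3) by (auto simp: gM split: if_splits)
    then show ?thesis using that(2) R by auto
  qed
  have inj: "inj_on g (Pow R)"
  proof (rule inj_onI)
    fix W W' assume W: "W \<in> Pow R" "W' \<in> Pow R" "g W = g W'"
    then have "W' \<subseteq> W" using gsub gSW S(1) by metis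
    moreover have "W \<subseteq> W'" using W gsub[of W' W] gSW[of W'] S(1) by metis
    ultimately show "W = W'" by auto
  qed
  have BV: "g ` Pow R \<subseteq> V"
  proof
    fix x assume "x \<in> g ` Pow R"
    then obtain W where W: "W \<in> Pow R" "x = g W" by auto
    show "x \<in> V"
    proof (cases "W = {}")
      case True
      have "x = u" using W True u by (auto simp: fun_eq_iff gM bn_alg_def)
      moreover have "u = bn_scale 1 u + bn_mult e 0 u"
        by (simp add: fun_eq_iff bn_scale_def bn_mult_def)
      moreover have "(0 :: nat set \<Rightarrow> 'a) \<in> bn_alg e" by (simp add: bn_alg_def)
      ultimately show ?thesis unfolding V_def by blast
    next
      case False
      have "bn_delta W \<in> bn_alg e" using False W R by (auto simp: bn_alg_def bn_delta_def)
      moreover have "x = bn_scale 0 u + bn_mult e (bn_delta W) u"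
        using W by (simp add: fun_eq_iff bn_scale_def g_def)
      ultimately show ?thesis unfolding V_def by blast
    qed
  qed
  have indep: "independent (g ` Pow R)"
  proof
    assume "dependent (g ` Pow R)"
    then obtain c where c: "\<exists>v\<in>g ` Pow R. c v \<noteq> 0" "(\<Sum>v\<in>g ` Pow R. bn_scale (c v) v) = 0"
      using dependent_finite[of "g ` Pow R"] fR by auto
    define d where "d W = c (g W)" for W
    have sum0: "(\<Sum>W\<in>Pow R. bn_scale (d W) (g W)) = 0"
      using c(2) sum.reindex[OF inj, of "\<lambda>v. bn_scale (c v) v"] by (simp add: d_def)
    have "\<exists>W. W \<in> Pow R \<and> d W \<noteq> 0" using c(1) d_def by auto
    then obtain n where "\<exists>W. W \<in> Pow R \<and> d W \<noteq> 0 \<and> card W = n" by blast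
    then obtain n0 where n0: "\<exists>W. W \<in> Pow R \<and> d W \<noteq> 0 \<and> card W = n0"
      "\<And>m. (\<exists>W. W \<in> Pow R \<and> d W \<noteq> 0 \<and> card W = m) \<Longrightarrow> n0 \<le> m"
      using ex_has_least_nat[of "\<lambda>n. \<exists>W. W \<in> Pow R \<and> d W \<noteq> 0 \<and> card W = n" _ id]
      by (metis id_apply)
    then obtain W0 where W0: "W0 \<in> Pow R" "d W0 \<noteq> 0" "card W0 = n0" by blast
    have "(\<Sum>W\<in>Pow R. bn_scale (d W) (g W)) (S \<union> W0) = (\<Sum>W\<in>Pow R. d W * g W (S \<union> W0))"
      by (simp add: bn_scale_def sum_fun_app)
    also have "\<dots> = (\<Sum>W\<in>{W0}. d W * g W (S \<union> W0))"
    proof (rule sum.mono_neutral_right)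
      show "finite (Pow R)" using fR by simp
      show "{W0} \<subseteq> Pow R" using W0 by simp
      show "\<forall>W\<in>Pow R - {W0}. d W * g W (S \<union> W0) = 0"
      proof
        fix W assume W: "W \<in> Pow R - {W0}"
        show "d W * g W (S \<union> W0) = 0"
        proof (rule ccontr)
          assume "d W * g W (S \<union> W0) \<noteq> 0"
          then have dW: "d W \<noteq> 0" and gW: "g W (S \<union> W0) \<noteq> 0" by auto
          have "W \<subseteq> W0" using gsub[OF W0(1) _ gW] W by auto
          then have "card W < card W0" using W W0(1) fR
            by (metis DiffD1 DiffD2 PowD finite_subset insertI1 psubsetI psubset_card_mono)
          moreover have "n0 \<le> card W" using n0(2)[of "card W"] W dW by blast
          ultimately show False using W0 by simp
        qed
      qed
    qed
    also have "\<dots> = d W0 * u S" using gSW[OF W0(1)] by simp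
    finally show False using sum0 W0(2) S(1) by simp
  qed
  obtain A where A: "g ` Pow R \<subseteq> A" "A \<subseteq> V" "independent A" "V \<subseteq> span A"
    using maximal_independent_subset_extend[OF BV indep] by blast
  have "V \<subseteq> {f. \<forall>S. f S \<noteq> 0 \<longrightarrow> S \<subseteq> {..<e}}"
    unfolding V_def using u
    by (auto simp: bn_scale_def bn_alg_def) (metis add.right_neutral bn_mult_supp mult_zero_right subsetD lessThan_iff)
  then have fV: "finite V" using bn_finite_supp finite_subset by blast
  then have fA: "finite A" using A finite_subset by blast
  have "dim V = card A" using basis_card_eq_dim[OF A(2) A(4) A(3)] by simp
  moreover have "card (g ` Pow R) \<le> card A" using card_mono[OF fA A(1)] .
  moreover have "card (g ` Pow R) = 2 ^ (t - 1)"
    using card_image[OF inj] card_Pow[of R] R(2) fR by simp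
  ultimately show ?thesis unfolding V_def by simp
qed

end
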